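(* Let $\mathbb{F}$ be an algebraically closed field with $\mathrm{char}\,\mathbb{F}=2$, and let $\mathcal{A}$ be a (not necessarily unital) subalgebra of $\mathbf{O}$ with $\mathcal{A}\subseteq\mathbf{O}_0$ and $\dim\mathcal{A}\ge3$. Then there exists $g\in{\rm G}_2$ such that either (a) $\{1_{\mathbf{O}},\mathbf{u}_1,\mathbf{v}_2\}\subseteq g\mathcal{A}$; or (b) $\{\mathbf{u}_1,\mathbf{v}_2,\mathbf{v}_3\}\subseteq g\mathcal{A}$ and $1_{\mathbf{O}}\notin g\mathcal{A}$.
   Context: The split octonion algebra $\mathbf{O}$ is the 8-dimensional $\mathbb{F}$-vector space of formal matrices $a=\begin{pmatrix}\alpha&\mathbf{u}\\ \mathbf{v}&\beta\end{pmatrix}$ with $\alpha,\beta\in\mathbb{F}$, $\mathbf{u},\mathbf{v}\in\mathbb{F}^3$, with multiplication $\begin{pmatrix}\alpha&\mathbf{u}\\ \mathbf{v}&\beta\end{pmatrix}\begin{pmatrix}\alpha'&\mathbf{u}'\\ \mathbf{v}'&\beta'\end{pmatrix}=\begin{pmatrix}\alpha\alpha'+\mathbf{u}\cdot\mathbf{v}'&\alpha\mathbf{u}'+\beta'\mathbf{u}-\mathbf{v}\times\mathbf{v}'\\ \alpha'\mathbf{v}+\beta\mathbf{v}'+\mathbf{u}\times\mathbf{u}'&\beta\beta'+\mathbf{v}\cdot\mathbf{u}'\end{pmatrix}$ (dot product and cross product on $\mathbb{F}^3$). Trace $\mathrm{tr}(a)=\alpha+\beta$, $\mathbf{O}_0=\{a\in\mathbf{O}\mid\mathrm{tr}(a)=0\}$.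 With $\mathbf{c}_1,\mathbf{c}_2,\mathbf{c}_3$ the standard basis of $\mathbb{F}^3$: $\mathbf{u}_i$ has $\mathbf{u}=\mathbf{c}_i$ and all else $0$, $\mathbf{v}_i$ has $\mathbf{v}=\mathbf{c}_i$ and all else $0$, and $1_{\mathbf{O}}$ has $\alpha=\beta=1$, $\mathbf{u}=\mathbf{v}=0$. ${\rm G}_2=\mathrm{Aut}(\mathbf{O})$. *)

theory Defs
  imports "HOL-Computational_Algebra.Polynomial"
begin

type_synonym 'a vec3 = "'a \<times> 'a \<times> 'a"

definition vadd :: "'a::field vec3 \<Rightarrow> 'a vec3 \<Rightarrow> 'a vec3" where
  "vadd x y = (case x of (x1,x2,x3) \<Rightarrow> case y of (y1,y2,y3) \<Rightarrow> (x1+y1, x2+y2, x3+y3))"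
definition vsmult :: "'a::field \<Rightarrow> 'a vec3 \<Rightarrow> 'a vec3" where
  "vsmult c x = (case x of (x1,x2,x3) \<Rightarrow> (c*x1, c*x2, c*x3))"
definition vneg :: "'a::field vec3 \<Rightarrow> 'a vec3" where
  "vneg x = vsmult (-1) x"
definition vdot :: "'a::field vec3 \<Rightarrow> 'a vec3 \<Rightarrow> 'a" where
  "vdot x y = (case x of (x1,x2,x3) \<Rightarrow> case y of (y1,y2,y3) \<Rightarrow> x1*y1 + x2*y2 + x3*y3)"
definition vcross :: "'a::field vec3 \<Rightarrow> 'a vec3 \<Rightarrow> 'a vec3" where
  "vcross x y = (case x of (x1,x2,x3) \<Rightarrow> case y of (y1,y2,y3) \<Rightarrow>
     (x2*y3 - x3*y2, x3*y1 - x1*y3, x1*y2 - x2*y1))"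

text \<open>Split octonions: formal matrices (alpha, u; v, beta).\<close>
datatype 'a oct = Oct (oalpha: 'a) (ou: "'a vec3") (ov: "'a vec3") (obeta: 'a)

definition oadd :: "'a::field oct \<Rightarrow> 'a oct \<Rightarrow> 'a oct" where
  "oadd a b = Oct (oalpha a + oalpha b) (vadd (ou a) (ou b)) (vadd (ov a) (ov b)) (obeta a + obeta b)"
definition osmult :: "'a::field \<Rightarrow> 'a oct \<Rightarrow> 'a oct" where
  "osmult c a = Oct (c * oalpha a) (vsmult c (ou a)) (vsmult c (ov a)) (c * obeta a)"
definition ozero :: "'a::field oct" where
  "ozero = Oct 0 (0,0,0) (0,0,0) 0"
definition omult :: "'a::field oct \<Rightarrow> 'a oct \<Rightarrow> 'a oct" where
  "omult a b = Oct
     (oalpha a * oalpha b + vdot (ou a) (ov b))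
     (vadd (vadd (vsmult (oalpha a) (ou b)) (vsmult (obeta b) (ou a))) (vneg (vcross (ov a) (ov b))))
     (vadd (vadd (vsmult (oalpha b) (ov a)) (vsmult (obeta a) (ov b))) (vcross (ou a) (ou b)))
     (obeta a * obeta b + vdot (ov a) (ou b))"

definition otr :: "'a::field oct \<Rightarrow> 'a" where
  "otr a = oalpha a + obeta a"

definition O0 :: "'a::field oct set" where
  "O0 = {a. otr a = 0}"

definition oone :: "'a::field oct" where "oone = Oct 1 (0,0,0) (0,0,0) 1"
definition u1 :: "'a::field oct" where "u1 = Oct 0 (1,0,0) (0,0,0) 0"
definition v2 :: "'a::field oct" where "v2 = Oct 0 (0,0,0) (0,1,0) 0"
definition v3 :: "'a::field oct" where "v3 = Oct 0 (0,0,0) (0,0,1) 0"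

definition olinear :: "('a::field oct \<Rightarrow> 'a oct) \<Rightarrow> bool" where
  "olinear f \<longleftrightarrow> (\<forall>a b. f (oadd a b) = oadd (f a) (f b)) \<and> (\<forall>c a. f (osmult c a) = osmult c (f a))"

definition G2 :: "('a::field oct \<Rightarrow> 'a oct) set" where
  "G2 = {g. olinear g \<and> bij g \<and> (\<forall>a b. g (omult a b) = omult (g a) (g b))}"

definition osubspace :: "'a::field oct set \<Rightarrow> bool" where
  "osubspace A \<longleftrightarrow> ozero \<in> A \<and> (\<forall>a\<in>A. \<forall>b\<in>A. oadd a b \<in> A) \<and> (\<forall>c. \<forall>a\<in>A. osmult c a \<in> A)"

definition osubalgebra :: "'a::field oct set \<Rightarrow> bool" where
  "osubalgebra A \<longleftrightarrow> osubspace A \<and> (\<forall>a\<in>A. \<forall>b\<in>A. omult a b \<in> A)"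

definition olin_indep :: "'a::field oct list \<Rightarrow> bool" where
  "olin_indep xs \<longleftrightarrow> (\<forall>c :: nat \<Rightarrow> 'a.
     foldr oadd (map (\<lambda>i. osmult (c i) (xs ! i)) [0..<length xs]) ozero = ozero
     \<longrightarrow> (\<forall>i<length xs. c i = 0))"

definition odim_ge :: "'a::field oct set \<Rightarrow> nat \<Rightarrow> bool" where
  "odim_ge A n \<longleftrightarrow> (\<exists>xs. length xs = n \<and> set xs \<subseteq> A \<and> olin_indep xs)"

end

theory Submission
  imports Defs
begin


lemma vadd3[simp]: "vadd (a,b,c) (d,e,f) = (a+d,b+e,c+f)" by (simp add: vadd_def)
lemma vsmult3[simp]: "vsmult k (a,b,c) = (k*a,k*b,k*c)" by (simp add: vsmult_def)
lemma vneg3[simp]: "vneg (a,b,c) = (-a,-b,-c)" by (simp add: vneg_def)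
lemma vdot3[simp]: "vdot (a,b,c) (d,e,f) = a*d+b*e+c*f" by (simp add: vdot_def)
lemma vcross3[simp]: "vcross (a,b,c) (d,e,f) = (b*f-c*e, c*d-a*f, a*e-b*d)" by (simp add: vcross_def)

type_synonym 'a mat3 = "'a vec3 \<times> 'a vec3 \<times> 'a vec3"
definition mv :: "'a::field mat3 \<Rightarrow> 'a vec3 \<Rightarrow> 'a vec3" where
  "mv M u = (case M of (r1,r2,r3) \<Rightarrow> (vdot r1 u, vdot r2 u, vdot r3 u))"
definition cof :: "'a::field mat3 \<Rightarrow> 'a mat3" where
  "cof M = (case M of (r1,r2,r3) \<Rightarrow> (vcross r2 r3, vcross r3 r1, vcross r1 r2))"
definition mdet :: "'a::field mat3 \<Rightarrow> 'a" where
  "mdet M = (case M of (r1,r2,r3) \<Rightarrow> vdot r1 (vcross r2 r3))"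
definition mtr :: "'a::field mat3 \<Rightarrow> 'a mat3" where
  "mtr M = (case M of ((a,b,c),(d,e,f),(g,h,i)) \<Rightarrow> ((a,d,g),(b,e,h),(c,f,i)))"

definition TM :: "'a::field mat3 \<Rightarrow> 'a oct \<Rightarrow> 'a oct" where
  "TM M a = Oct (oalpha a) (mv M (ou a)) (mv (cof M) (ov a)) (obeta a)"

lemma oct_cases: obtains al a1 a2 a3 b1 b2 b3 be where "x = Oct al (a1,a2,a3) (b1,b2,b3) be"
  by (metis oct.exhaust prod_cases3)
lemma mat_cases: obtains a b c d e f g h i where "M = ((a,b,c),(d,e,f),(g,h,i))"
  by (metis prod_cases3)

lemma mv_add: "mv M (vadd x y) = vadd (mv M x) (mv M y)"
  by (cases M; cases x; cases y) (auto simp: mv_def vadd_def vdot_def algebra_simps)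
lemma mv_smult: "mv M (vsmult c x) = vsmult c (mv M x)"
  by (cases M; cases x) (auto simp: mv_def vsmult_def vdot_def algebra_simps)
lemma mv_neg: "mv M (vneg x) = vneg (mv M x)"
  by (simp add: vneg_def mv_smult)
lemma L1: "vdot (mv M u) (mv (cof M) v) = mdet M * vdot u v"
proof -
  obtain a b c d e f g h i where M: "M = ((a,b,c),(d,e,f),(g,h,i))" by (rule mat_cases)
  obtain u1 u2 u3 v1 v2 v3 where "u = (u1,u2,u3)" "v = (v1,v2,v3)" by (metis prod_cases3)
  then show ?thesis by (simp add: M mv_def cof_def mdet_def algebra_simps)
qed
lemma L2: "vcross (mv M u) (mv M v) = mv (cof M) (vcross u v)"
proof -
  obtain a b c d e f g h i where M: "M = ((a,b,c),(d,e,f),(g,h,i))" by (rule mat_cases)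
  obtain u1 u2 u3 v1 v2 v3 where "u = (u1,u2,u3)" "v = (v1,v2,v3)" by (metis prod_cases3)
  then show ?thesis by (simp add: M mv_def cof_def mdet_def algebra_simps)
qed
lemma L3: "vcross (mv (cof M) u) (mv (cof M) v) = vsmult (mdet M) (mv M (vcross u v))"
proof -
  obtain a b c d e f g h i where M: "M = ((a,b,c),(d,e,f),(g,h,i))" by (rule mat_cases)
  obtain u1 u2 u3 v1 v2 v3 where "u = (u1,u2,u3)" "v = (v1,v2,v3)" by (metis prod_cases3)
  then show ?thesis by (simp add: M mv_def cof_def mdet_def algebra_simps)
qed
lemma L4: "mv (cof (cof M)) u = vsmult (mdet M) (mv M u)"
proof -
  obtain a b c d e f g h i where M: "M = ((a,b,c),(d,e,f),(g,h,i))" by (rule mat_cases)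
  obtain u1 u2 u3 where "u = (u1,u2,u3)" by (metis prod_cases3)
  then show ?thesis by (simp add: M mv_def cof_def mdet_def algebra_simps)
qed
lemma vdot_comm: "vdot x y = vdot y x"
  by (cases x; cases y) (simp add: algebra_simps)
lemma vsmult_one[simp]: "vsmult 1 x = x" by (cases x) simp

lemma TM_mult:
  assumes "mdet M = 1"
  shows "TM M (omult x y) = omult (TM M x) (TM M y)"
  using assms by (simp add: TM_def omult_def mv_add mv_smult mv_neg L1 L2 L4 vdot_comm[of "mv (cof M) _"]) (simp add: vdot_comm)

lemma oct_eq_iff: "(Oct a u v b = Oct a' u' v' b') = (a=a' \<and> u=u' \<and> v=v' \<and> b=b')" by simp

definition sig :: "'a::field oct \<Rightarrow> 'a oct" where
  "sig a = Oct (obeta a) (vneg (ov a)) (vneg (ou a)) (oalpha a)"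
definition Ew :: "'a::field vec3 \<Rightarrow> 'a oct \<Rightarrow> 'a oct" where
  "Ew w a = Oct (oalpha a - vdot w (ov a))
     (vadd (vadd (ou a) (vsmult (oalpha a - obeta a) w)) (vsmult (- vdot w (ov a)) w))
     (vadd (ov a) (vcross w (ou a))) (obeta a + vdot w (ov a))"

lemma Ew_mult: "Ew w (omult x y) = omult (Ew w x) (Ew w y)"
proof -
  obtain w1 w2 w3 where w: "w = (w1,w2,w3)" by (metis prod_cases3)
  obtain al a1 a2 a3 b1 b2 b3 be where x: "x = Oct al (a1,a2,a3) (b1,b2,b3) be" by (rule oct_cases)
  obtain al' a1' a2' a3' b1' b2' b3' be' where y: "y = Oct al' (a1',a2',a3') (b1',b2',b3') be'" by (rule oct_cases)
  show ?thesis
    by (simp add: w x y Ew_def omult_def algebra_simps)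
qed

lemma sig_mult: "sig (omult x y) = omult (sig x) (sig y)"
proof -
  obtain al a1 a2 a3 b1 b2 b3 be where x: "x = Oct al (a1,a2,a3) (b1,b2,b3) be" by (rule oct_cases)
  obtain al' a1' a2' a3' b1' b2' b3' be' where y: "y = Oct al' (a1',a2',a3') (b1',b2',b3') be'" by (rule oct_cases)
  show ?thesis
    by (simp add: x y sig_def omult_def algebra_simps)
qed

lemma alt_left: "omult x (omult x y) = omult (omult x x) y"
proof -
  obtain al a1 a2 a3 b1 b2 b3 be where x: "x = Oct al (a1,a2,a3) (b1,b2,b3) be" by (rule oct_cases)
  obtain al' a1' a2' a3' b1' b2' b3' be' where y: "y = Oct al' (a1',a2',a3') (b1',b2',b3') be'" by (rule oct_cases)
  show ?thesis
    by (simp add: x y omult_def algebra_simps)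
qed

lemma G2I:
  assumes "\<And>a b. f (oadd a b) = oadd (f a) (f b)"
    and "\<And>c a. f (osmult c a) = osmult c (f a)"
    and "\<And>a b. f (omult a b) = omult (f a) (f b)"
    and "\<And>a. h (f a) = a" and "\<And>a. f (h a) = a"
  shows "f \<in> G2"
proof -
  have "bij f" by (rule bij_betw_byWitness[where f'=h]) (use assms in auto)
  then show ?thesis using assms by (auto simp: G2_def olinear_def)
qed

lemma G2_comp: "f \<in> G2 \<Longrightarrow> g \<in> G2 \<Longrightarrow> f \<circ> g \<in> G2"
  by (auto simp: G2_def olinear_def bij_comp)

definition good :: "('a::field oct \<Rightarrow> 'a oct) \<Rightarrow> bool" where
  "good g \<longleftrightarrow> g \<in> G2 \<and> g oone = oone \<and> (\<forall>a. otr (g a) = otr a)"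

lemma good_comp: "good f \<Longrightarrow> good g \<Longrightarrow> good (f \<circ> g)"
  by (auto simp: good_def G2_comp)

lemma sig_good: "good (sig :: 'a::field oct \<Rightarrow> 'a oct)"
proof -
  have "sig \<in> (G2 :: ('a oct \<Rightarrow> 'a oct) set)"
  proof (rule G2I[where h=sig])
    fix a b :: "'a oct"
    show "sig (oadd a b) = oadd (sig a) (sig b)"
      by (cases a; cases b) (auto simp: sig_def oadd_def vneg_def vsmult_def vadd_def split: prod.splits)
    show "sig (omult a b) = omult (sig a) (sig b)" by (rule sig_mult)
    show "sig (sig a) = a"
      by (cases a) (auto simp: sig_def vneg_def vsmult_def split: prod.splits)
    show "sig (sig a) = a"
      by (cases a) (auto simp: sig_def vneg_def vsmult_def split: prod.splits)
  next
    fix c and a :: "'a oct"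
    show "sig (osmult c a) = osmult c (sig a)"
      by (cases a) (auto simp: sig_def osmult_def vneg_def vsmult_def split: prod.splits)
  qed
  moreover have "sig oone = (oone :: 'a oct)" by (simp add: sig_def oone_def)
  moreover have "otr (sig a) = otr a" for a :: "'a oct" by (simp add: sig_def otr_def)
  ultimately show ?thesis by (simp add: good_def)
qed

lemma Ew_good: "good (Ew (w::'a::field vec3))"
proof -
  obtain w1 w2 w3 where w: "w = (w1,w2,w3)" by (metis prod_cases3)
  have "Ew w \<in> G2"
  proof (rule G2I[where h="Ew (vneg w)"])
    fix a b :: "'a oct"
    obtain al a1 a2 a3 b1 b2 b3 be where x: "a = Oct al (a1,a2,a3) (b1,b2,b3) be" by (rule oct_cases)
    obtain al' a1' a2' a3' b1' b2' b3' be' where y: "b = Oct al' (a1',a2',a3') (b1',b2',b3') be'" by (rule oct_cases)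
    show "Ew w (oadd a b) = oadd (Ew w a) (Ew w b)"
      by (simp add: w x y Ew_def oadd_def algebra_simps)
    show "Ew w (omult a b) = omult (Ew w a) (Ew w b)" by (rule Ew_mult)
    show "Ew (vneg w) (Ew w a) = a"
      by (simp add: w x Ew_def algebra_simps)
    show "Ew w (Ew (vneg w) a) = a"
      by (simp add: w x Ew_def algebra_simps)
  next
    fix c and a :: "'a oct"
    obtain al a1 a2 a3 b1 b2 b3 be where x: "a = Oct al (a1,a2,a3) (b1,b2,b3) be" by (rule oct_cases)
    show "Ew w (osmult c a) = osmult c (Ew w a)"
      by (simp add: w x Ew_def osmult_def algebra_simps)
  qed
  moreover have "Ew w oone = oone" by (simp add: w Ew_def oone_def)
  moreover have "otr (Ew w a) = otr a" for a by (simp add: Ew_def otr_def)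
  ultimately show ?thesis by (simp add: good_def)
qed

lemma I1: "mv (mtr (cof M)) (mv M u) = vsmult (mdet M) u"
proof -
  obtain a b c d e f g h i where M: "M = ((a,b,c),(d,e,f),(g,h,i))" by (rule mat_cases)
  obtain u1 u2 u3 where "u = (u1,u2,u3)" by (metis prod_cases3)
  then show ?thesis by (simp add: M mv_def cof_def mdet_def mtr_def algebra_simps)
qed
lemma I2: "mv M (mv (mtr (cof M)) u) = vsmult (mdet M) u"
proof -
  obtain a b c d e f g h i where M: "M = ((a,b,c),(d,e,f),(g,h,i))" by (rule mat_cases)
  obtain u1 u2 u3 where "u = (u1,u2,u3)" by (metis prod_cases3)
  then show ?thesis by (simp add: M mv_def cof_def mdet_def mtr_def algebra_simps)
qed
lemma I3: "mv (mtr M) (mv (cof M) u) = vsmult (mdet M) u"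
proof -
  obtain a b c d e f g h i where M: "M = ((a,b,c),(d,e,f),(g,h,i))" by (rule mat_cases)
  obtain u1 u2 u3 where "u = (u1,u2,u3)" by (metis prod_cases3)
  then show ?thesis by (simp add: M mv_def cof_def mdet_def mtr_def algebra_simps)
qed
lemma I4: "mv (cof M) (mv (mtr M) u) = vsmult (mdet M) u"
proof -
  obtain a b c d e f g h i where M: "M = ((a,b,c),(d,e,f),(g,h,i))" by (rule mat_cases)
  obtain u1 u2 u3 where "u = (u1,u2,u3)" by (metis prod_cases3)
  then show ?thesis by (simp add: M mv_def cof_def mdet_def mtr_def algebra_simps)
qed
lemma mv_zero[simp]: "mv M (0,0,0) = (0,0,0)"
  by (cases M) (auto simp: mv_def split: prod.splits)

lemma TM_good: assumes "mdet (M::'a::field mat3) = 1" shows "good (TM M)"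
proof -
  have "TM M \<in> G2"
  proof (rule G2I[where h="\<lambda>a. Oct (oalpha a) (mv (mtr (cof M)) (ou a)) (mv (mtr M) (ov a)) (obeta a)"])
    fix a b :: "'a oct"
    show "TM M (oadd a b) = oadd (TM M a) (TM M b)"
      by (simp add: TM_def oadd_def mv_add)
    show "TM M (omult a b) = omult (TM M a) (TM M b)" by (rule TM_mult[OF assms])
    show "Oct (oalpha (TM M a)) (mv (mtr (cof M)) (ou (TM M a))) (mv (mtr M) (ov (TM M a))) (obeta (TM M a)) = a"
      using assms by (cases a) (simp add: TM_def I1 I3)
    show "TM M (Oct (oalpha a) (mv (mtr (cof M)) (ou a)) (mv (mtr M) (ov a)) (obeta a)) = a"
      using assms by (cases a) (simp add: TM_def I2 I4)
  next
    fix c and a :: "'a oct"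
    show "TM M (osmult c a) = osmult c (TM M a)"
      by (simp add: TM_def osmult_def mv_smult)
  qed
  moreover have "TM M oone = oone" by (simp add: TM_def oone_def)
  moreover have "otr (TM M a) = otr a" for a by (simp add: TM_def otr_def)
  ultimately show ?thesis by (simp add: good_def)
qed




definition onorm :: "'a::field oct \<Rightarrow> 'a" where
  "onorm a = oalpha a * obeta a - vdot (ou a) (ov a)"

definition indep3 :: "'a::field oct \<Rightarrow> 'a oct \<Rightarrow> 'a oct \<Rightarrow> bool" where
  "indep3 a b c \<longleftrightarrow> (\<forall>k1 k2 k3. oadd (osmult k1 a) (oadd (osmult k2 b) (osmult k3 c)) = ozero
      \<longrightarrow> k1 = 0 \<and> k2 = 0 \<and> k3 = 0)"

lemma oadd_ozero: "oadd x ozero = (x::'a::field oct)"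
  by (cases x) (auto simp: oadd_def ozero_def vadd_def split: prod.splits)
lemma osmult_0: "osmult 0 x = (ozero::'a::field oct)"
  by (cases x) (auto simp: osmult_def ozero_def vsmult_def split: prod.splits)

lemma odim3:
  assumes "odim_ge A 3"
  shows "\<exists>a b c. a \<in> A \<and> b \<in> A \<and> c \<in> A \<and> indep3 a b c"
proof -
  obtain xs where xs: "length xs = 3" "set xs \<subseteq> A" "olin_indep xs"
    using assms by (auto simp: odim_ge_def)
  then obtain a b c where abc: "xs = [a,b,c]"
    by (auto simp: numeral_3_eq_3 length_Suc_conv)
  have "indep3 a b c"
    unfolding indep3_def
  proof (intro allI impI)
    fix k1 k2 k3
    assume h: "oadd (osmult k1 a) (oadd (osmult k2 b) (osmult k3 c)) = ozero"
    define cc where "cc = (\<lambda>i::nat. if i = 0 then k1 else if i = 1 then k2 else k3)"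
    have "foldr oadd (map (\<lambda>i. osmult (cc i) (xs ! i)) [0..<length xs]) ozero = ozero"
      using h by (simp add: abc cc_def upt_rec oadd_ozero)
    then have "\<forall>i<3. cc i = 0" using xs(3) xs(1) by (simp add: olin_indep_def)
    then have "cc 0 = 0" "cc 1 = 0" "cc 2 = 0" by auto
    then show "k1 = 0 \<and> k2 = 0 \<and> k3 = 0" by (simp add: cc_def)
  qed
  then show ?thesis using xs abc by auto
qed

lemma G2_zero: assumes "g \<in> G2" shows "g ozero = ozero"
proof -
  have "g (osmult 0 ozero) = osmult 0 (g ozero)" using assms by (simp add: G2_def olinear_def)
  then show ?thesis by (simp add: osmult_0)
qed

lemma G2_inj: "g \<in> G2 \<Longrightarrow> inj g"
  by (simp add: G2_def bij_is_inj)

lemma indep3_map: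
  assumes "g \<in> G2" "indep3 a b c"
  shows "indep3 (g a) (g b) (g c)"
  unfolding indep3_def
proof (intro allI impI)
  fix k1 k2 k3
  assume h: "oadd (osmult k1 (g a)) (oadd (osmult k2 (g b)) (osmult k3 (g c))) = ozero"
  have "g (oadd (osmult k1 a) (oadd (osmult k2 b) (osmult k3 c))) = g ozero"
    using assms(1) h by (simp add: G2_def olinear_def G2_zero)
  then have "oadd (osmult k1 a) (oadd (osmult k2 b) (osmult k3 c)) = ozero"
    using G2_inj[OF assms(1)] by (simp add: inj_eq)
  then show "k1 = 0 \<and> k2 = 0 \<and> k3 = 0" using assms(2) by (simp add: indep3_def)
qed

lemma sub_zero: "osubalgebra A \<Longrightarrow> ozero \<in> A" by (simp add: osubalgebra_def osubspace_def)
lemma sub_add: "osubalgebra A \<Longrightarrow> a \<in> A \<Longrightarrow> b \<in> A \<Longrightarrow> oadd a b \<in> A"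
  by (simp add: osubalgebra_def osubspace_def)
lemma sub_smult: "osubalgebra A \<Longrightarrow> a \<in> A \<Longrightarrow> osmult c a \<in> A"
  by (simp add: osubalgebra_def osubspace_def)
lemma sub_mult: "osubalgebra A \<Longrightarrow> a \<in> A \<Longrightarrow> b \<in> A \<Longrightarrow> omult a b \<in> A"
  by (simp add: osubalgebra_def osubspace_def)

lemma sub_image:
  assumes "g \<in> G2" "osubalgebra A"
  shows "osubalgebra (g ` A)"
proof -
  have lin: "\<And>a b. g (oadd a b) = oadd (g a) (g b)" "\<And>c a. g (osmult c a) = osmult c (g a)"
    and mul: "\<And>a b. g (omult a b) = omult (g a) (g b)"
    using assms(1) by (auto simp: G2_def olinear_def)
  show ?thesis unfolding osubalgebra_def osubspace_def
  proof (intro conjI ballI allI)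
    show "ozero \<in> g ` A" using G2_zero[OF assms(1)] sub_zero[OF assms(2)] by force
  next
    fix x y assume "x \<in> g ` A" "y \<in> g ` A"
    then obtain a b where "a \<in> A" "b \<in> A" "x = g a" "y = g b" by auto
    then show "oadd x y \<in> g ` A" "omult x y \<in> g ` A"
      using lin mul sub_add[OF assms(2)] sub_mult[OF assms(2)] by (metis image_eqI)+
  next
    fix c x assume "x \<in> g ` A"
    then obtain a where "a \<in> A" "x = g a" by auto
    then show "osmult c x \<in> g ` A"
      using lin sub_smult[OF assms(2)] by (metis image_eqI)
  qed
qed

lemma sq_O0: "otr x = 0 \<Longrightarrow> omult x x = osmult (- onorm x) oone"
proof -
  obtain al a1 a2 a3 b1 b2 b3 be where x: "x = Oct al (a1,a2,a3) (b1,b2,b3) be" by (rule oct_cases)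
  assume "otr x = 0"
  then have "be = -al" by (simp add: x otr_def eq_neg_iff_add_eq_0 add.commute)
  then show ?thesis by (simp add: x omult_def osmult_def onorm_def oone_def algebra_simps)
qed

lemma anticomm_O0:
  assumes "otr x = 0" "otr y = 0"
  shows "oadd (omult x y) (omult y x) = osmult (otr (omult x y)) oone"
proof -
  obtain al a1 a2 a3 b1 b2 b3 be where x: "x = Oct al (a1,a2,a3) (b1,b2,b3) be" by (rule oct_cases)
  obtain al' a1' a2' a3' b1' b2' b3' be' where y: "y = Oct al' (a1',a2',a3') (b1',b2',b3') be'" by (rule oct_cases)
  have "be = -al" "be' = -al'" using assms by (simp_all add: x y otr_def eq_neg_iff_add_eq_0 add.commute)
  then show ?thesis by (simp add: x y omult_def osmult_def oadd_def otr_def oone_def algebra_simps)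
qed

lemma char2_eq: assumes "(2::'a::field) = 0" "p + q = (0::'a)" shows "p = q"
proof -
  have "q + q = 0" using assms(1) by (metis mult_2 mult_zero_left)
  then show ?thesis using assms(2) by (metis add_right_cancel)
qed

lemma char2_oadd:
  assumes "(2::'a::field) = 0" "oadd x y = (ozero::'a oct)"
  shows "x = y"
proof -
  obtain al a1 a2 a3 b1 b2 b3 be where x: "x = Oct al (a1,a2,a3) (b1,b2,b3) be" by (rule oct_cases)
  obtain al' a1' a2' a3' b1' b2' b3' be' where y: "y = Oct al' (a1',a2',a3') (b1',b2',b3') be'" by (rule oct_cases)
  have "al + al' = 0 \<and> a1 + a1' = 0 \<and> a2 + a2' = 0 \<and> a3 + a3' = 0 \<and> b1 + b1' = 0 \<and> b2 + b2' = 0 \<and> b3 + b3' = 0 \<and> be + be' = 0"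
    using assms(2) by (simp add: x y oadd_def ozero_def)
  then have "al = al'" "a1 = a1'" "a2 = a2'" "a3 = a3'" "b1 = b1'" "b2 = b2'" "b3 = b3'" "be = be'"
    by (auto intro: char2_eq[OF assms(1)])
  then show ?thesis by (simp add: x y)
qed

lemma comm_O0:
  assumes "(2::'a::field) = 0" "otr x = 0" "otr y = 0" "otr (omult x y) = (0::'a)"
  shows "omult x y = omult y x"
proof -
  have "oadd (omult x y) (omult y x) = ozero"
    using anticomm_O0[OF assms(2,3)] assms(4) by (simp add: osmult_0)
  then show ?thesis by (rule char2_oadd[OF assms(1)])
qed




lemma exM:
  assumes "u \<noteq> ((0::'a::field),0,0)"
  shows "\<exists>M. mdet M = 1 \<and> mv M u = (1,0,0)"
proof -
  obtain x y z where u: "u = (x,y,z)" by (metis prod_cases3)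
  show ?thesis
  proof (cases "x = 0")
    case False
    let ?M = "((1/x,0,0),(-y,x,0),(-z/x,0,1))"
    have "mdet ?M = 1 \<and> mv ?M u = (1,0,0)" using False
      by (simp add: u mdet_def mv_def field_simps)
    then show ?thesis by blast
  next
    case x: True
    show ?thesis
    proof (cases "y = 0")
      case False
      let ?M = "((0,1/y,0),(-y,0,0),(0,-z/y,1))"
      have "mdet ?M = 1 \<and> mv ?M u = (1,0,0)" using False x
        by (simp add: u mdet_def mv_def field_simps)
      then show ?thesis by blast
    next
      case True
      then have "z \<noteq> 0" using x assms u by auto
      let ?M = "((0,0,1/z),(z,0,0),(0,1,0))"
      have "mdet ?M = 1 \<and> mv ?M u = (1,0,0)" using \<open>z \<noteq> 0\<close> x True
        by (simp add: u mdet_def mv_def field_simps)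
      then show ?thesis by blast
    qed
  qed
qed

lemma fixM:
  assumes "(s,t) \<noteq> ((0::'a::field),0)"
  shows "\<exists>M. mdet M = 1 \<and> mv M (1,0,0) = (1,0,0) \<and> mv (cof M) (0,s,t) = (0,1,0)"
proof (cases "s = 0")
  case False
  let ?M = "((1,0,0),(0,s,t),(0,0,1/s))"
  have "mdet ?M = 1 \<and> mv ?M (1,0,0) = (1,0,0) \<and> mv (cof ?M) (0,s,t) = (0,1,0)" using False
    by (simp add: mdet_def mv_def cof_def field_simps)
  then show ?thesis by blast
next
  case True
  then have "t \<noteq> 0" using assms by auto
  let ?M = "((1,0,0),(0,0,t),(0,-1/t,0))"
  have "mdet ?M = 1 \<and> mv ?M (1,0,0) = (1,0,0) \<and> mv (cof ?M) (0,s,t) = (0,1,0)" using True \<open>t \<noteq> 0\<close>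
    by (simp add: mdet_def mv_def cof_def field_simps)
  then show ?thesis by blast
qed

lemma vdot_zero[simp]: "vdot (0,0,0) v = (0::'a::field)" by (cases v) simp

lemma vdot_zero2[simp]: "vdot v (0,0,0) = (0::'a::field)" by (cases v) simp

lemma normA: "Ew (0, q3, -q2) (Oct 0 (1,0,0) (0,q2,q3) 0) = (u1::'a::field oct)"
  by (simp add: Ew_def u1_def)

lemma normB:
  assumes "u \<noteq> ((0::'a::field),0,0)" "vdot u v = 0"
  shows "\<exists>g. good g \<and> g (Oct 0 u v 0) = u1"
proof -
  obtain M where M: "mdet M = 1" "mv M u = (1,0,0)" using exM[OF assms(1)] by blast
  obtain y1 y2 y3 where y: "mv (cof M) v = (y1,y2,y3)" by (metis prod_cases3)
  have "vdot (mv M u) (mv (cof M) v) = 0" using L1[of M u v] M assms by simp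
  then have "y1 = 0" using M y by simp
  then have "TM M (Oct 0 u v 0) = Oct 0 (1,0,0) (0,y2,y3) 0" using M y by (simp add: TM_def)
  then have "(Ew (0,y3,-y2) \<circ> TM M) (Oct 0 u v 0) = u1" using normA by simp
  moreover have "good (Ew (0,y3,-y2) \<circ> TM M)" by (rule good_comp[OF Ew_good TM_good[OF M(1)]])
  ultimately show ?thesis by blast
qed

lemma normC:
  assumes "- (al * al) - q1 = (0::'a::field)"
  shows "\<exists>g. good g \<and> g (Oct al (1,0,0) (q1,q2,q3) (-al)) = u1"
proof -
  have e: "(sig \<circ> Ew (al,0,0) \<circ> sig) (Oct al (1,0,0) (q1,q2,q3) (-al))
     = Oct 0 (1, -al*q3, al*q2) (q1 + al*al, q2, q3) 0"
    by (simp add: sig_def Ew_def algebra_simps)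
  have q: "q1 = -(al*al)" using assms right_minus_eq by metis
  have "vdot ((1::'a), -al*q3, al*q2) (q1 + al*al, q2, q3) = 0"
    by (simp add: q algebra_simps)
  moreover have ne: "((1::'a), -al*q3, al*q2) \<noteq> (0,0,0)" by simp
  ultimately obtain g where g: "good g" "g (Oct 0 (1, -al*q3, al*q2) (q1 + al*al, q2, q3) 0) = u1"
    using normB by blast
  have "good (g \<circ> (sig \<circ> Ew (al,0,0) \<circ> sig))"
    by (intro good_comp g(1) sig_good Ew_good)
  then show ?thesis using e g(2) by (metis comp_apply)
qed

lemma normD:
  assumes "u \<noteq> ((0::'a::field),0,0)" "al * (-al) - vdot u v = 0"
  shows "\<exists>g. good g \<and> g (Oct al u v (-al)) = u1"
proof -
  obtain M where M: "mdet M = 1" "mv M u = (1,0,0)" using exM[OF assms(1)] by blast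
  obtain y1 y2 y3 where y: "mv (cof M) v = (y1,y2,y3)" by (metis prod_cases3)
  have "vdot (mv M u) (mv (cof M) v) = vdot u v" using L1[of M u v] M by simp
  then have "- (al*al) - y1 = 0" using M y assms(2) by simp
  then obtain g where g: "good g" "g (Oct al (1,0,0) (y1,y2,y3) (-al)) = u1"
    using normC by blast
  have "TM M (Oct al u v (-al)) = Oct al (1,0,0) (y1,y2,y3) (-al)" using M y by (simp add: TM_def)
  moreover have "good (g \<circ> TM M)" by (rule good_comp[OF g(1) TM_good[OF M(1)]])
  ultimately show ?thesis using g(2) by (metis comp_apply)
qed

lemma normalize:
  assumes "otr x = 0" "onorm x = 0" "x \<noteq> (ozero::'a::field oct)"
  shows "\<exists>g. good g \<and> g x = u1"
proof -
  obtain al u v be where x: "x = Oct al u v be" by (cases x)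
  have be: "be = -al" using assms(1) by (simp add: x otr_def eq_neg_iff_add_eq_0 add.commute)
  show ?thesis
  proof (cases "u = (0,0,0)")
    case False
    then show ?thesis using normD[of u al v] assms(2) by (simp add: x be onorm_def)
  next
    case True
    then have "al * al = 0" using assms(2) by (simp add: x be onorm_def)
    then have al: "al = 0" by simp
    then have v: "v \<noteq> (0,0,0)" using assms(3) True by (auto simp: x be ozero_def)
    have "sig x = Oct 0 (vneg v) (0,0,0) 0" by (simp add: x be al True sig_def)
    moreover have "vneg v \<noteq> (0,0,0)" using v by (cases v) simp
    ultimately obtain g where g: "good g" "g (sig x) = u1"
      using normD[of "vneg v" 0 "(0,0,0)"] by auto
    have "good (g \<circ> sig)" by (rule good_comp[OF g(1) sig_good])
    then show ?thesis using g(2) by (metis comp_apply)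
  qed
qed



lemma FIN2:
  assumes "osubalgebra B" "u1 \<in> B" "Oct 0 (0,0,0) (0,r2,r3) 0 \<in> B" "(r2,r3) \<noteq> ((0::'a::field),0)"
  shows "\<exists>h. good h \<and> u1 \<in> h ` B \<and> v2 \<in> h ` B"
proof -
  obtain M where M: "mdet M = 1" "mv M (1,0,0) = (1,0,0)" "mv (cof M) (0,r2,r3) = (0,1,0)"
    using fixM[OF assms(4)] by blast
  have "TM M u1 = u1" using M by (simp add: TM_def u1_def)
  moreover have "TM M (Oct 0 (0,0,0) (0,r2,r3) 0) = v2" using M by (simp add: TM_def v2_def)
  ultimately have "u1 \<in> TM M ` B" "v2 \<in> TM M ` B" using assms(2,3) by (metis image_eqI)+
  then show ?thesis using TM_good[OF M(1)] by blast
qed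

lemma CASE1:
  assumes "osubalgebra B" "B \<subseteq> O0" "u1 \<in> B" "Z \<in> B" "onorm Z = 0"
    and "\<forall>\<mu>. Z \<noteq> osmult \<mu> (u1::'a::field oct)"
  shows "\<exists>h. good h \<and> u1 \<in> h ` B \<and> v2 \<in> h ` B"
proof -
  obtain a p1 p2 p3 q1 q2 q3 be where Z: "Z = Oct a (p1,p2,p3) (q1,q2,q3) be" by (rule oct_cases)
  have "otr Z = 0" using assms(2,4) by (auto simp: O0_def)
  then have be: "be = -a" by (simp add: Z otr_def eq_neg_iff_add_eq_0 add.commute)
  have "omult u1 Z \<in> B" by (rule sub_mult[OF assms(1,3,4)])
  then have "otr (omult u1 Z) = 0" using assms(2) by (auto simp: O0_def)
  then have q1: "q1 = 0" by (simp add: Z u1_def omult_def otr_def)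
  show ?thesis
  proof (cases "(p3,p2) = (0,0)")
    case False
    have "oadd (omult u1 Z) (osmult a u1) = Oct 0 (0,0,0) (0,-p3,p2) 0"
      by (simp add: Z be q1 u1_def omult_def oadd_def osmult_def)
    moreover have "oadd (omult u1 Z) (osmult a u1) \<in> B"
      by (intro sub_add[OF assms(1)] sub_smult[OF assms(1)] sub_mult[OF assms(1)] assms(3,4))
    moreover have "(-p3,p2) \<noteq> (0,0)" using False by simp
    ultimately show ?thesis using FIN2[OF assms(1,3)] by metis
  next
    case True
    then have "a * a = 0" using assms(5) by (simp add: Z be q1 onorm_def)
    then have a: "a = 0" by simp
    have "(q2,q3) \<noteq> (0,0)"
    proof
      assume "(q2,q3) = (0,0)"
      then have "Z = osmult p1 u1" using True by (simp add: Z be q1 a u1_def osmult_def)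
      then show False using assms(6) by blast
    qed
    moreover have "oadd Z (osmult (-p1) u1) = Oct 0 (0,0,0) (0,q2,q3) 0"
      using True by (simp add: Z be q1 a u1_def oadd_def osmult_def)
    moreover have "oadd Z (osmult (-p1) u1) \<in> B"
      by (intro sub_add[OF assms(1)] sub_smult[OF assms(1)] assms(3,4))
    ultimately show ?thesis using FIN2[OF assms(1,3)] by metis
  qed
qed

lemma ANN:
  assumes "otr Y = 0" "omult Y u1 = (ozero::'a::field oct)"
  shows "\<exists>a b c. Y = Oct 0 (a,0,0) (0,b,c) 0"
proof -
  obtain al p1 p2 p3 q1 q2 q3 be where Y: "Y = Oct al (p1,p2,p3) (q1,q2,q3) be" by (rule oct_cases)
  have be: "be = -al" using assms(1) by (simp add: Y otr_def eq_neg_iff_add_eq_0 add.commute)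
  have "al = 0 \<and> p2 = 0 \<and> p3 = 0 \<and> q1 = 0" using assms(2) by (simp add: Y u1_def omult_def ozero_def)
  then show ?thesis by (simp add: Y be)
qed

lemma CASE2:
  assumes "osubalgebra B" "u1 \<in> B" "Y \<in> B" "Z \<in> B"
    and "Y = Oct 0 (a,0,0) (0,b,c) 0" "Z = Oct 0 (a',0,0) (0,b',c') 0"
    and "omult Y Z = (u1::'a::field oct)"
  shows "v2 \<in> B \<and> v3 \<in> B"
proof -
  have d: "c*b' - b*c' = 1" using assms(5-7) by (simp add: u1_def omult_def)
  have "oadd (osmult c Z) (oadd (osmult (-c') Y) (osmult (c'*a - c*a') u1)) = v2"
    using d by (simp add: assms(5,6) oadd_def osmult_def u1_def v2_def algebra_simps)
  moreover have "oadd (osmult b' Y) (oadd (osmult (-b) Z) (osmult (b*a' - b'*a) u1)) = v3"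
    using d by (simp add: assms(5,6) oadd_def osmult_def u1_def v3_def algebra_simps)
  moreover have "oadd (osmult c Z) (oadd (osmult (-c') Y) (osmult (c'*a - c*a') u1)) \<in> B"
    by (intro sub_add[OF assms(1)] sub_smult[OF assms(1)] assms(2-4))
  moreover have "oadd (osmult b' Y) (oadd (osmult (-b) Z) (osmult (b*a' - b'*a) u1)) \<in> B"
    by (intro sub_add[OF assms(1)] sub_smult[OF assms(1)] assms(2-4))
  ultimately show ?thesis by simp
qed

lemma DEP2:
  assumes "indep3 u1 W2 W3"
    and "W2 = Oct 0 (a2,0,0) (0,b2,c2) 0" "W3 = Oct 0 (a3,0,0) (0,b3,c3) 0"
    and "omult W2 W3 = (ozero::'a::field oct)"
  shows False
proof -
  have e: "c2*b3 - b2*c3 = 0" using assms(2-4) by (simp add: omult_def ozero_def)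
  have comb: "oadd (osmult k1 u1) (oadd (osmult k2 W2) (osmult k3 W3)) = ozero"
    if "k1 + k2*a2 + k3*a3 = 0" "k2*b2 + k3*b3 = 0" "k2*c2 + k3*c3 = 0" for k1 k2 k3
    using that by (simp add: assms(2,3) oadd_def osmult_def u1_def ozero_def add.assoc)
  have ind: "k1 = 0 \<and> k2 = 0 \<and> k3 = 0"
    if "k1 + k2*a2 + k3*a3 = 0" "k2*b2 + k3*b3 = 0" "k2*c2 + k3*c3 = 0" for k1 k2 k3
    using comb[OF that] assms(1) by (simp add: indep3_def)
  show False
  proof (cases "b2 = 0 \<and> c2 = 0")
    case True
    then show False using ind[of "-a2" 1 0] by simp
  next
    case False
    show False
    proof (cases "b2 = 0")
      case b2: True
      then have "c2 \<noteq> 0" using False by simp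
      have "-(c3*a2 - c2*a3) + c3*a2 + (-c2)*a3 = 0" "c3*b2 + (-c2)*b3 = 0" "c3*c2 + (-c2)*c3 = 0"
        using e b2 \<open>c2 \<noteq> 0\<close> by (auto simp: algebra_simps)
      then show False using ind[of "-(c3*a2 - c2*a3)" c3 "-c2"] \<open>c2 \<noteq> 0\<close> by simp
    next
      case b2: False
      have "-(b3*a2 - b2*a3) + b3*a2 + (-b2)*a3 = 0" "b3*b2 + (-b2)*b3 = 0" "b3*c2 + (-b2)*c3 = 0"
        using e by (auto simp: algebra_simps)
      then show False using ind[of "-(b3*a2 - b2*a3)" b3 "-b2"] b2 by simp
    qed
  qed
qed

lemma field_dep2:
  fixes m1 m2 m3 n1 n2 n3 :: "'a::field"
  shows "\<exists>k1 k2 k3. (k1 \<noteq> 0 \<or> k2 \<noteq> 0 \<or> k3 \<noteq> 0) \<and> k1*m1 + k2*m2 + k3*m3 = 0 \<and> k1*n1 + k2*n2 + k3*n3 = 0"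
proof -
  let ?c1 = "m2*n3 - m3*n2" and ?c2 = "m3*n1 - m1*n3" and ?c3 = "m1*n2 - m2*n1"
  show ?thesis
  proof (cases "?c1 \<noteq> 0 \<or> ?c2 \<noteq> 0 \<or> ?c3 \<noteq> 0")
    case True
    have "?c1*m1 + ?c2*m2 + ?c3*m3 = 0" "?c1*n1 + ?c2*n2 + ?c3*n3 = 0" by (simp_all add: algebra_simps)
    then show ?thesis using True by blast
  next
    case False
    then have z: "m2*n3 = m3*n2" "m3*n1 = m1*n3" "m1*n2 = m2*n1" by auto
    show ?thesis
    proof (cases "m1 = 0 \<and> m2 = 0 \<and> m3 = 0")
      case m0: True
      show ?thesis
      proof (cases "n1 = 0")
        case True
        then show ?thesis using m0 by (intro exI[of _ 1] exI[of _ 0]) simp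
      next
        case False
        then show ?thesis using m0 by (intro exI[of _ "-n2"] exI[of _ n1] exI[of _ 0]) (simp add: algebra_simps)
      qed
    next
      case m0: False
      show ?thesis
      proof (cases "m1 = 0")
        case m1: True
        show ?thesis
        proof (cases "m2 = 0")
          case True
          then have "m3 \<noteq> 0" using m0 m1 by simp
          have "n1 = 0" "n2 = 0" using z m1 True \<open>m3 \<noteq> 0\<close> by auto
          then show ?thesis using m1 True by (intro exI[of _ 1] exI[of _ 0]) simp
        next
          case False
          have "n1 = 0" using z m1 False by auto
          then show ?thesis using m1 by (intro exI[of _ 1] exI[of _ 0]) simp
        qed
      next
        case False
        have "(-m2)*m1 + m1*m2 + 0*m3 = 0" "(-m2)*n1 + m1*n2 + 0*n3 = 0"
          using z by (simp_all add: algebra_simps)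
        then show ?thesis using False by (intro exI[of _ "-m2"] exI[of _ m1] exI[of _ 0]) simp
      qed
    qed
  qed
qed

lemma span2_dep:
  assumes "indep3 x y z"
    and "x = oadd (osmult m1 e) (osmult n1 f)" "y = oadd (osmult m2 e) (osmult n2 f)"
    and "z = oadd (osmult m3 e) (osmult n3 (f::'a::field oct))"
  shows False
proof -
  obtain k1 k2 k3 where k: "k1 \<noteq> 0 \<or> k2 \<noteq> 0 \<or> k3 \<noteq> 0" "k1*m1 + k2*m2 + k3*m3 = 0" "k1*n1 + k2*n2 + k3*n3 = 0"
    using field_dep2 by blast
  obtain al a1 a2 a3 b1 b2 b3 be where e: "e = Oct al (a1,a2,a3) (b1,b2,b3) be" by (rule oct_cases)
  obtain al' a1' a2' a3' b1' b2' b3' be' where f: "f = Oct al' (a1',a2',a3') (b1',b2',b3') be'" by (rule oct_cases)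
  have h: "k1 * (m1 * t + n1 * s) + (k2 * (m2 * t + n2 * s) + k3 * (m3 * t + n3 * s)) = 0" for t s
  proof -
    have "k1 * (m1 * t + n1 * s) + (k2 * (m2 * t + n2 * s) + k3 * (m3 * t + n3 * s))
      = (k1*m1 + k2*m2 + k3*m3) * t + (k1*n1 + k2*n2 + k3*n3) * s" by (simp add: algebra_simps)
    then show ?thesis using k by simp
  qed
  have "oadd (osmult k1 x) (oadd (osmult k2 y) (osmult k3 z)) = ozero"
    by (simp add: assms(2-4) e f oadd_def osmult_def ozero_def h)
  then show False using assms(1) k(1) by (simp add: indep3_def)
qed



lemma good_lin:
  assumes "good g"
  shows "g (oadd a b) = oadd (g a) (g b)" "g (osmult c a) = osmult c (g a)"
    "g (omult a b) = omult (g a) (g b)" "g ozero = ozero" "inj g" "g oone = oone" "otr (g a) = otr a"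
  using assms G2_zero G2_inj by (auto simp: good_def G2_def olinear_def)

lemma osmult_osmult: "osmult c (osmult d x) = osmult (c*d) (x::'a::field oct)"
  by (cases x) (auto simp: osmult_def vsmult_def split: prod.splits)
lemma osmult_one: "osmult 1 x = (x::'a::field oct)"
  by (cases x) (auto simp: osmult_def vsmult_def split: prod.splits)
lemma omult_ozero: "omult ozero x = (ozero::'a::field oct)"
  by (cases x) (auto simp: omult_def ozero_def vsmult_def vadd_def vneg_def vcross_def vdot_def split: prod.splits)
lemma unshift: "oadd w (osmult l f) = v \<Longrightarrow> w = oadd v (osmult (-l) (f::'a::field oct))"
  by (cases w; cases f) (auto simp: oadd_def osmult_def vsmult_def vadd_def split: prod.splits)
lemma shiftN: "otr w = 0 \<Longrightarrow> onorm (oadd w (osmult l oone)) = onorm w + l*(l::'a::field)"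
proof -
  obtain al a1 a2 a3 b1 b2 b3 be where w: "w = Oct al (a1,a2,a3) (b1,b2,b3) be" by (rule oct_cases)
  assume "otr w = 0"
  then have be: "be = -al" by (simp add: w otr_def eq_neg_iff_add_eq_0 add.commute)
  show ?thesis by (simp add: w be onorm_def oadd_def osmult_def oone_def algebra_simps)
qed
lemma shiftT: "otr w = 0 \<Longrightarrow> otr (oadd w (osmult l oone)) = 2*(l::'a::field)"
  by (simp add: otr_def oadd_def osmult_def oone_def algebra_simps)
lemma oone_smult_zero: "osmult n oone = (ozero::'a::field oct) \<Longrightarrow> n = 0"
  by (simp add: osmult_def oone_def ozero_def)
lemma indep3_nz: "indep3 a b c \<Longrightarrow> a \<noteq> (ozero::'a::field oct)"
proof
  assume "indep3 a b c" "a = ozero"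
  then have "oadd (osmult 1 a) (oadd (osmult 0 b) (osmult 0 c)) = ozero"
    by (simp add: osmult_0 osmult_one oadd_ozero)
  then have "(1::'a) = 0" using \<open>indep3 a b c\<close> unfolding indep3_def by blast
  then show False by simp
qed

lemma sqrt_ex: "\<exists>l. l*l = (x::'a::alg_closed_field)"
  using nth_root_exists[of 2 x] by (auto simp: power2_eq_square)

theorem lemma6p9:
  fixes A :: "'a::alg_closed_field oct set"
  assumes "CHAR('a) = 2"
    and "osubalgebra A"
    and "A \<subseteq> O0"
    and "odim_ge A 3"
  shows "\<exists>g\<in>G2. {oone, u1, v2} \<subseteq> g ` A
            \<or> ({u1, v2, v3} \<subseteq> g ` A \<and> oone \<notin> g ` A)"
proof -
  have "of_nat CHAR('a) = (0::'a)" by (rule of_nat_CHAR)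
  then have two: "(2::'a) = 0" using assms(1) by simp
  note sub = assms(2)
  obtain w1 w2 w3 where W: "w1 \<in> A" "w2 \<in> A" "w3 \<in> A" "indep3 w1 w2 w3"
    using odim3[OF assms(4)] by blast
  have trA: "\<And>a. a \<in> A \<Longrightarrow> otr a = 0" using assms(3) by (auto simp: O0_def)
  have commA: "\<And>a b. a \<in> A \<Longrightarrow> b \<in> A \<Longrightarrow> omult a b = omult b a"
    using comm_O0[OF two] trA sub_mult[OF sub] by blast
  have imgsub: "\<And>g. good g \<Longrightarrow> osubalgebra (g ` A)" using sub_image[OF _ sub] by (auto simp: good_def)
  have imgO: "\<And>g. good g \<Longrightarrow> g ` A \<subseteq> O0" using trA good_lin(7) by (fastforce simp: O0_def)
  show ?thesis
  proof (cases "oone \<in> A")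
    case True
    obtain l1 where l1: "l1*l1 = - onorm w1" using sqrt_ex by blast
    obtain l2 where l2: "l2*l2 = - onorm w2" using sqrt_ex by blast
    obtain l3 where l3: "l3*l3 = - onorm w3" using sqrt_ex by blast
    define x1 where "x1 = oadd w1 (osmult l1 oone)"
    define x2 where "x2 = oadd w2 (osmult l2 oone)"
    define x3 where "x3 = oadd w3 (osmult l3 oone)"
    have xA: "x1 \<in> A" "x2 \<in> A" "x3 \<in> A" unfolding x1_def x2_def x3_def
      using W True by (auto intro!: sub_add[OF sub] sub_smult[OF sub])
    have xN: "onorm x1 = 0" "onorm x2 = 0" "onorm x3 = 0" unfolding x1_def x2_def x3_def
      using shiftN[OF trA[OF W(1)]] shiftN[OF trA[OF W(2)]] shiftN[OF trA[OF W(3)]] l1 l2 l3 by simp_all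
    define y0 where "y0 = (if x1 \<noteq> ozero then x1 else if x2 \<noteq> ozero then x2 else x3)"
    have y0A: "y0 \<in> A" "onorm y0 = 0" using xA xN by (auto simp: y0_def)
    have "\<exists>z \<in> {x1,x2,x3}. \<forall>\<mu>. z \<noteq> osmult \<mu> y0"
    proof (rule ccontr)
      assume "\<not> ?thesis"
      then obtain m1 m2 m3 where m: "x1 = osmult m1 y0" "x2 = osmult m2 y0" "x3 = osmult m3 y0" by auto
      have "w1 = oadd (osmult m1 y0) (osmult (-l1) oone)" using m(1) unshift x1_def by metis
      moreover have "w2 = oadd (osmult m2 y0) (osmult (-l2) oone)" using m(2) unshift x2_def by metis
      moreover have "w3 = oadd (osmult m3 y0) (osmult (-l3) oone)" using m(3) unshift x3_def by metis
      ultimately show False using span2_dep[OF W(4)] by blast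
    qed
    then obtain z where z: "z \<in> A" "onorm z = 0" "\<forall>\<mu>. z \<noteq> osmult \<mu> y0" using xA xN by auto
    have "y0 \<noteq> ozero"
    proof
      assume "y0 = ozero"
      then have "x1 = ozero" "x2 = ozero" "x3 = ozero" by (auto simp: y0_def split: if_splits)
      then show False using z(3) osmult_0 by (metis (no_types, lifting) \<open>y0 = ozero\<close> z(1) \<open>\<exists>z\<in>{x1, x2, x3}. \<forall>\<mu>. z \<noteq> osmult \<mu> y0\<close> insert_iff singletonD)
    qed
    then obtain g where g: "good g" "g y0 = u1" using normalize trA y0A by blast
    let ?B = "g ` A"
    have Bsub: "osubalgebra ?B" and BO: "?B \<subseteq> O0" using imgsub imgO g by auto
    have u1B: "u1 \<in> ?B" using g y0A by (metis image_eqI)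
    have ZB: "g z \<in> ?B" using z by auto
    have "omult z z = ozero" using sq_O0[OF trA[OF z(1)]] z(2) by (simp add: osmult_0)
    then have "omult (g z) (g z) = ozero" using good_lin(3,4)[OF g(1)] by metis
    then have "osmult (- onorm (g z)) oone = ozero"
      using sq_O0[of "g z"] trA[OF z(1)] good_lin(7)[OF g(1)] by simp
    then have ZN: "onorm (g z) = 0" using oone_smult_zero by fastforce
    have Zn: "\<forall>\<mu>. g z \<noteq> osmult \<mu> u1"
    proof
      fix \<mu> show "g z \<noteq> osmult \<mu> u1"
      proof
        assume "g z = osmult \<mu> u1"
        then have "g z = g (osmult \<mu> y0)" using good_lin[OF g(1)] g(2) by simp
        then have "z = osmult \<mu> y0" using good_lin(5)[OF g(1)] by (simp add: inj_eq)
        then show False using z(3) by blast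
      qed
    qed
    obtain h where h: "good h" "u1 \<in> h ` ?B" "v2 \<in> h ` ?B"
      using CASE1[OF Bsub BO u1B ZB ZN Zn] by blast
    have gh: "good (h \<circ> g)" by (rule good_comp[OF h(1) g(1)])
    have "oone \<in> (h \<circ> g) ` A" using True good_lin(6)[OF gh] by (metis image_eqI)
    moreover have "u1 \<in> (h \<circ> g) ` A" "v2 \<in> (h \<circ> g) ` A" using h(2,3) by (simp_all add: image_comp)
    moreover have "h \<circ> g \<in> G2" using gh by (simp add: good_def)
    ultimately have "{oone, u1, v2} \<subseteq> (h \<circ> g) ` A \<and> h \<circ> g \<in> G2" by simp
    then show ?thesis by blast
  next
    case False
    have nA: "\<And>a. a \<in> A \<Longrightarrow> onorm a = 0"
    proof (rule ccontr)
      fix a assume a: "a \<in> A" "onorm a \<noteq> 0"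
      have "osmult (- 1 / onorm a) (omult a a) \<in> A" using a by (intro sub_smult[OF sub] sub_mult[OF sub])
      moreover have "osmult (- 1 / onorm a) (omult a a) = oone"
        using a sq_O0[OF trA[OF a(1)]] by (simp add: osmult_osmult osmult_one)
      ultimately show False using False by simp
    qed
    have sqA: "omult a a = ozero" if "a \<in> A" for a
      using sq_O0[OF trA[OF that]] nA[OF that] by (simp add: osmult_0)
    have noone: "oone \<notin> g ` A" if "good g" for g
    proof
      assume "oone \<in> g ` A"
      then obtain a where "a \<in> A" "g a = oone" by auto
      then have "g a = g oone" using good_lin(6)[OF that] by simp
      then have "a = oone" using good_lin(5)[OF that] by (simp add: inj_eq)
      then show False using False \<open>a \<in> A\<close> by simp
    qed
    show ?thesis
    proof (cases "\<exists>y\<in>A. \<exists>z\<in>A. omult y z \<noteq> ozero")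
      case True
      then obtain y z where yz: "y \<in> A" "z \<in> A" "omult y z \<noteq> ozero" by blast
      have xA: "omult y z \<in> A" using yz by (intro sub_mult[OF sub])
      obtain g where g: "good g" "g (omult y z) = u1"
        using normalize[of "omult y z"] trA[OF xA] nA[OF xA] yz(3) by blast
      note gl = good_lin[OF g(1)]
      have "omult (g y) u1 = ozero"
        using g(2) gl alt_left[of y z] sqA[OF yz(1)] by (metis omult_ozero)
      moreover have "omult (g z) u1 = ozero"
        using g(2) gl alt_left[of z y] sqA[OF yz(2)] commA[OF yz(1,2)] by (metis omult_ozero)
      ultimately obtain a b c a' b' c' where Y: "g y = Oct 0 (a,0,0) (0,b,c) 0"
          and Z: "g z = Oct 0 (a',0,0) (0,b',c') 0"
        using ANN trA yz gl(7) by metis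
      have "omult (g y) (g z) = u1" using g gl by simp
      then have "v2 \<in> g ` A \<and> v3 \<in> g ` A"
        using CASE2[OF imgsub[OF g(1)] _ _ _ Y Z] g yz xA by (metis image_eqI)
      moreover have "u1 \<in> g ` A" using g xA by (metis image_eqI)
      ultimately show ?thesis using noone[OF g(1)] g(1) by (auto simp: good_def)
    next
      case False
      then have zero: "\<And>y z. y \<in> A \<Longrightarrow> z \<in> A \<Longrightarrow> omult y z = ozero" by blast
      obtain g where g: "good g" "g w1 = u1"
        using normalize[of w1] trA[OF W(1)] nA[OF W(1)] indep3_nz[OF W(4)] by blast
      note gl = good_lin[OF g(1)]
      have "omult (g w2) u1 = ozero" using g(2) gl zero W by metis
      moreover have "omult (g w3) u1 = ozero" using g(2) gl zero W by metis
      ultimately obtain a2 b2 c2 a3 b3 c3 where Y: "g w2 = Oct 0 (a2,0,0) (0,b2,c2) 0"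
          and Z: "g w3 = Oct 0 (a3,0,0) (0,b3,c3) 0"
        using ANN trA W gl(7) by metis
      have "omult (g w2) (g w3) = ozero" using gl zero W by metis
      moreover have "indep3 u1 (g w2) (g w3)" using indep3_map[OF _ W(4), of g] g by (simp add: good_def)
      ultimately show ?thesis using DEP2 Y Z by blast
    qed
  qed
qed

end
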